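(* Let $m>n$ be coprime positive integers. The orbit of $\Lambda_0=(m(n-1),\dots,m,0\,|\,0,n,\dots,n(m-1))$ under the Weyl groupoid action on $\mathbb Z^{n|m}$ contains $\Lambda_1=(0,1,\dots,n-1\,|\,0,1,\dots,m-1)$.
   Context: Elements of $\mathbb Z^{n|m}$ are written $(a_1,\dots,a_n|b_1,\dots,b_m)$, identified with $\sum_ia_i\epsilon_i-\sum_jb_j\delta_j$. The Weyl groupoid action is generated by the permutations of $a_1,\dots,a_n$ among themselves and of $b_1,\dots,b_m$ among themselves, and, for $\alpha=\epsilon_i-\delta_j$, by $\tau_\alpha:\Pi_\alpha\to\Pi_{-\alpha}$, $\Lambda\mapsto\Lambda+n\epsilon_i-m\delta_j$ (add $n$ to $a_i$ and $m$ to $b_j$), and $\tau_{-\alpha}=\tau_\alpha^{-1}$, where $\Pi_\alpha=\{a_i=b_j\}$ and $\Pi_{-\alpha}=\{a_i-b_j=n-m\}$. The orbit of $\Lambda_0$ is the set of elements reachable from $\Lambda_0$ by finite sequences of these operations, each applied on its domain. *)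

theory Defs
  imports Main
begin

text \<open>An element (a_1,...,a_n | b_1,...,b_m) of Z^{n|m} is represented as a pair
  of integer lists (a, b) with length a = n and length b = m (list index k
  corresponds to a_{k+1}, resp. b_{k+1}).\<close>

type_synonym superwt = "int list \<times> int list"

text \<open>One generating step of the Weyl groupoid action on Z^{n|m}:
  a transposition of two a-entries, a transposition of two b-entries,
  tau_alpha for alpha = eps_i - delta_j (defined on a_i = b_j, adds n to a_i and m to b_j),
  or its inverse tau_{-alpha} (defined on a_i - b_j = n - m, subtracts n from a_i and m from b_j).\<close>

definition weyl_step :: "nat \<Rightarrow> nat \<Rightarrow> superwt \<Rightarrow> superwt \<Rightarrow> bool" where
  "weyl_step n m X Y \<longleftrightarrow>
     (let a = fst X; b = snd X in
       length a = n \<and> length b = m \<and>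
       ((\<exists>i<n. \<exists>j<n. Y = (a[i := a!j, j := a!i], b))
      \<or> (\<exists>i<m. \<exists>j<m. Y = (a, b[i := b!j, j := b!i]))
      \<or> (\<exists>i<n. \<exists>j<m. a!i = b!j \<and> Y = (a[i := a!i + int n], b[j := b!j + int m]))
      \<or> (\<exists>i<n. \<exists>j<m. a!i - b!j = int n - int m \<and>
                        Y = (a[i := a!i - int n], b[j := b!j - int m]))))"

definition in_weyl_orbit :: "nat \<Rightarrow> nat \<Rightarrow> superwt \<Rightarrow> superwt \<Rightarrow> bool" where
  "in_weyl_orbit n m X Y \<longleftrightarrow> (weyl_step n m)\<^sup>*\<^sup>* X Y"

end

theory Submission
  imports Defs "HOL-Library.Multiset"
begin

definition swp :: "int list \<Rightarrow> int list \<Rightarrow> bool" where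
  "swp xs ys \<longleftrightarrow> (\<exists>i<length xs. \<exists>j<length xs. ys = xs[i := xs!j, j := xs!i])"

lemma swp_cons: "swp\<^sup>*\<^sup>* xs ys \<Longrightarrow> swp\<^sup>*\<^sup>* (y#xs) (y#ys)"
proof (induction rule: rtranclp_induct)
  case base then show ?case by simp
next
  case (step u v)
  then obtain i j where ij: "i < length u" "j < length u" "v = u[i := u!j, j := u!i]"
    unfolding swp_def by blast
  have "swp (y#u) (y#v)" unfolding swp_def
    by (rule exI[of _ "Suc i"], simp add: ij(1), rule exI[of _ "Suc j"], simp add: ij)
  then show ?case using step.IH by simp
qed

lemma swp_mset_aux: "length xs = N \<Longrightarrow> mset xs = mset ys \<Longrightarrow> swp\<^sup>*\<^sup>* xs ys"
proof (induction N arbitrary: xs ys)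
  case 0 then show ?case by simp
next
  case (Suc N)
  then obtain x xs' where xs: "xs = x # xs'" by (cases xs) auto
  have "ys \<noteq> []" using Suc.prems xs by auto
  then obtain y ys' where ys: "ys = y # ys'" by (cases ys) auto
  have "y \<in> set xs" using Suc.prems ys by (metis list.set_intros(1) set_mset_mset)
  then obtain k where k: "k < length xs" "xs!k = y" by (meson in_set_conv_nth)
  define zs0 where "zs0 = xs[0 := xs!k, k := xs!0]"
  have s1: "swp xs zs0" unfolding swp_def zs0_def using k xs by blast
  have m: "mset zs0 = mset xs" unfolding zs0_def using k xs
    by (metis length_greater_0_conv list.discI mset_swap)
  have hz: "zs0 = y # tl zs0" unfolding zs0_def using k xs
    by (cases k) auto
  have "mset (y # tl zs0) = mset (y # ys')" using m hz Suc.prems ys by metis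
  then have "mset (tl zs0) = mset ys'" by simp
  moreover have "length zs0 = Suc N" using Suc.prems(1) unfolding zs0_def by simp
  then have "length (tl zs0) = N" by simp
  ultimately have "swp\<^sup>*\<^sup>* (tl zs0) ys'" using Suc.IH by blast
  then have "swp\<^sup>*\<^sup>* zs0 ys" using hz ys swp_cons by metis
  then show ?case using s1 by (meson converse_rtranclp_into_rtranclp)
qed

lemma swp_mset: "mset xs = mset ys \<Longrightarrow> swp\<^sup>*\<^sup>* xs ys"
  using swp_mset_aux by blast

lemma swp_len: "swp xs ys \<Longrightarrow> length ys = length xs"
  unfolding swp_def by auto

lemma swp_rt_len: "swp\<^sup>*\<^sup>* xs ys \<Longrightarrow> length ys = length xs"
  by (induction rule: rtranclp_induct) (auto dest: swp_len)

lemma liftA: "swp\<^sup>*\<^sup>* a a' \<Longrightarrow> length a = n \<Longrightarrow> length b = m \<Longrightarrow>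
   (weyl_step n m)\<^sup>*\<^sup>* (a, b) (a', b)"
proof (induction rule: rtranclp_induct)
  case base then show ?case by simp
next
  case (step u v)
  have "length u = n" using step swp_rt_len by metis
  then have "weyl_step n m (u, b) (v, b)" using step(2) step.prems
    unfolding weyl_step_def swp_def Let_def by auto
  then show ?case using step by (meson rtranclp.rtrancl_into_rtrancl)
qed

lemma liftB: "swp\<^sup>*\<^sup>* b b' \<Longrightarrow> length a = n \<Longrightarrow> length b = m \<Longrightarrow>
   (weyl_step n m)\<^sup>*\<^sup>* (a, b) (a, b')"
proof (induction rule: rtranclp_induct)
  case base then show ?case by simp
next
  case (step u v)
  have "length u = m" using step swp_rt_len by metis
  then have "weyl_step n m (a, u) (a, v)" using step(2) step.prems
    unfolding weyl_step_def swp_def Let_def by auto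
  then show ?case using step by (meson rtranclp.rtrancl_into_rtrancl)
qed

definition F :: "int \<Rightarrow> int \<Rightarrow> int \<Rightarrow> int" where
  "F p x t = (if x \<le> t then x else t + (x - t) mod p)"

lemma F_same: assumes "p > 0" "x \<le> t \<or> \<not> p dvd (x - t)"
  shows "F p x (t+1) = F p x t"
proof (cases "x \<le> t")
  case True then show ?thesis unfolding F_def by simp
next
  case False
  then have nd: "\<not> p dvd (x - t)" using assms by simp
  then have "(x - t) mod p \<noteq> 0" by auto
  define a where "a = x - (t+1)"
  have xa: "x - t = a + 1" unfolding a_def by simp
  have e: "(a + 1) mod p = (a mod p + 1) mod p" by (simp add: mod_add_left_eq)
  have b1: "0 \<le> a mod p" "a mod p < p" using assms(1) by auto
  have "a mod p + 1 \<noteq> p" using e nd xa by (metis mod_self dvd_eq_mod_eq_0)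
  then have "a mod p + 1 < p" using b1 by linarith
  then have "(x - t) mod p = (x - (t+1)) mod p + 1" using e xa b1 unfolding a_def[symmetric]
    by (simp add: mod_pos_pos_trivial)
  then show ?thesis using False unfolding F_def by (cases "x = t+1") auto
qed

lemma F_change: assumes "p > 0" "x > t" "p dvd (x - t)"
  shows "F p x (t+1) = t + p" "F p x t = t"
proof -
  have "(x - t) mod p = 0" using assms by simp
  define a where "a = x - (t+1)"
  have xa: "x - t = a + 1" unfolding a_def by simp
  have e: "(a + 1) mod p = (a mod p + 1) mod p" by (simp add: mod_add_left_eq)
  have b1: "0 \<le> a mod p" "a mod p < p" using assms(1) by auto
  have "a mod p + 1 = p"
  proof (rule ccontr)
    assume "a mod p + 1 \<noteq> p"
    then have "a mod p + 1 < p" using b1 by linarith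
    then have "(a + 1) mod p = a mod p + 1" using e b1 by (simp add: mod_pos_pos_trivial)
    moreover have "(a + 1) mod p = 0" using \<open>(x - t) mod p = 0\<close> xa by simp
    ultimately show False using b1 by linarith
  qed
  then have "(x - (t+1)) mod p = p - 1" unfolding a_def[symmetric] by linarith
  then show "F p x (t+1) = t + p" "F p x t = t" using assms unfolding F_def by auto
qed

lemma gap_sym:
  fixes p q i :: nat and t :: int
  assumes "p > 0" "i < q" "int p * int i > t" "int q dvd (int p * int i - t)"
  shows "\<exists>j<p. int q * int j > t \<and> int p dvd (int q * int j - t)"
proof -
  obtain k where k: "int p * int i - t = int q * k" using assms(4) by (auto elim: dvdE)
  have qpos: "int q > 0" using assms(2) by simp
  have "int q * k > 0" using k assms(3) by linarith
  then have kpos: "k > 0" using qpos zero_less_mult_pos by blast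
  define j where "j = (- k) mod int p"
  have j0: "0 \<le> j" "j < int p" unfolding j_def using assms(1) by auto
  have "(j + k) mod int p = 0" unfolding j_def by (simp add: mod_add_left_eq)
  then have "int p dvd (j + k)" by (simp add: dvd_eq_mod_eq_0)
  then obtain s where s: "j + k = int p * s" by (auto elim: dvdE)
  have "int p * s > 0" using s j0 kpos by linarith
  then have "s > 0" using assms(1) zero_less_mult_pos by (metis of_nat_0_less_iff)
  then have spos: "s \<ge> 1" by simp
  have e1: "int q * j - t = int q * (j + k) - int p * int i"
    using k by (simp add: algebra_simps)
  have e: "int q * j - t = int p * (int q * s - int i)"
    unfolding e1 s by (simp add: algebra_simps)
  have "int q * s \<ge> int q" using spos qpos by simp
  then have pos: "int q * s - int i > 0" using assms(2) by linarith
  have jj: "int (nat j) = j" using j0 by simp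
  show ?thesis
  proof (intro exI conjI)
    show "nat j < p" using j0 by simp
    show "int p dvd (int q * int (nat j) - t)" unfolding jj e by simp
    have "int p * (int q * s - int i) > 0" using pos assms(1) by simp
    then show "int q * int (nat j) > t" unfolding jj using e by linarith
  qed
qed

lemma uniq:
  fixes p q u v t :: int
  assumes "coprime p q" "q dvd (p*u - t)" "q dvd (p*v - t)" "0\<le>u" "u<q" "0\<le>v" "v<q"
  shows "u = v"
proof -
  have "q dvd (p*u - t) - (p*v - t)" using assms(2,3) by (rule dvd_diff)
  then have "q dvd p * (u - v)" by (simp add: algebra_simps)
  then have d: "q dvd (u - v)" using assms(1) by (metis coprime_commute coprime_dvd_mult_right_iff)
  show ?thesis
  proof (rule ccontr)
    assume "u \<noteq> v"
    then have "\<bar>q\<bar> \<le> \<bar>u - v\<bar>" using d dvd_imp_le_int by auto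
    then show False using assms by linarith
  qed
qed

definition AL :: "nat \<Rightarrow> nat \<Rightarrow> int \<Rightarrow> int list" where
  "AL n m t = map (\<lambda>k. F (int n) (int m * (int n - 1 - int k)) t) [0..<n]"
definition BL :: "nat \<Rightarrow> nat \<Rightarrow> int \<Rightarrow> int list" where
  "BL n m t = map (\<lambda>j. F (int m) (int n * int j) t) [0..<m]"

lemma len_AL[simp]: "length (AL n m t) = n" unfolding AL_def by simp
lemma len_BL[simp]: "length (BL n m t) = m" unfolding BL_def by simp

lemma step_lemma:
  assumes "0 < n" "n < m" "coprime m n"
  shows "(weyl_step n m)\<^sup>=\<^sup>= (AL n m (t+1), BL n m (t+1)) (AL n m t, BL n m t)"
proof -
  define x where "x = (\<lambda>k::nat. int m * (int n - 1 - int k))"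
  have cop: "coprime (int m) (int n)" using assms(3) by simp
  have cop': "coprime (int n) (int m)" using cop by (simp add: coprime_commute)
  have AL_nth: "\<And>k t. k < n \<Longrightarrow> AL n m t ! k = F (int n) (x k) t" unfolding AL_def x_def by simp
  have BL_nth: "\<And>j t. j < m \<Longrightarrow> BL n m t ! j = F (int m) (int n * int j) t" unfolding BL_def by simp
  have xi: "\<And>k. k < n \<Longrightarrow> x k = int m * int (n - 1 - k)" unfolding x_def by auto
  show ?thesis
  proof (cases "\<exists>k<n. x k > t \<and> int n dvd (x k - t)")
    case True
    then obtain k where k: "k < n" "x k > t" "int n dvd (x k - t)" by blast
    have "\<exists>j<m. int n * int j > t \<and> int m dvd (int n * int j - t)"
      apply (rule gap_sym[of m "n-1-k" n t]) using k xi[of k] assms by auto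
    then obtain j where j: "j < m" "int n * int j > t" "int m dvd (int n * int j - t)" by blast
    have ua: "\<And>k'. k' < n \<Longrightarrow> int n dvd (x k' - t) \<Longrightarrow> k' = k"
    proof -
      fix k' assume "k' < n" "int n dvd (x k' - t)"
      then have "int (n - 1 - k') = int (n - 1 - k)"
        using uniq[OF cop, of "int (n-1-k')" t "int (n-1-k)"] xi k by auto
      then show "k' = k" using \<open>k' < n\<close> k by simp
    qed
    have ub: "\<And>j'. j' < m \<Longrightarrow> int m dvd (int n * int j' - t) \<Longrightarrow> j' = j"
    proof -
      fix j' assume "j' < m" "int m dvd (int n * int j' - t)"
      then have "int j' = int j"
        using uniq[OF cop', of "int j'" t "int j"] j by auto
      then show "j' = j" by simp
    qed
    have a1: "AL n m (t+1) ! k = t + int n" using F_change(1)[of "int n" t "x k"] k assms AL_nth by simp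
    have b1: "BL n m (t+1) ! j = t + int m" using F_change(1)[of "int m" t] j assms BL_nth by simp
    have a0: "AL n m t = (AL n m (t+1))[k := t]"
    proof (rule nth_equalityI)
      show "length (AL n m t) = length ((AL n m (t+1))[k := t])" by simp
      fix i assume "i < length (AL n m t)"
      then have i: "i < n" by simp
      show "AL n m t ! i = (AL n m (t+1))[k := t] ! i"
      proof (cases "i = k")
        case True then show ?thesis using F_change(2)[of "int n" t "x k"] k assms AL_nth by simp
      next
        case False
        then have "\<not> int n dvd (x i - t)" using ua i by blast
        then show ?thesis using False F_same[of "int n" "x i" t] i assms AL_nth by simp
      qed
    qed
    have b0: "BL n m t = (BL n m (t+1))[j := t]"
    proof (rule nth_equalityI)
      show "length (BL n m t) = length ((BL n m (t+1))[j := t])" by simp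
      fix i assume "i < length (BL n m t)"
      then have i: "i < m" by simp
      show "BL n m t ! i = (BL n m (t+1))[j := t] ! i"
      proof (cases "i = j")
        case True then show ?thesis using F_change(2)[of "int m" t] j assms BL_nth by simp
      next
        case False
        then have "\<not> int m dvd (int n * int i - t)" using ub i by blast
        then show ?thesis using False F_same[of "int m" "int n * int i" t] i assms BL_nth by simp
      qed
    qed
    have "weyl_step n m (AL n m (t+1), BL n m (t+1)) (AL n m t, BL n m t)"
      unfolding weyl_step_def Let_def fst_conv snd_conv
      apply (intro conjI)
        apply simp
       apply simp
      apply (rule disjI2, rule disjI2, rule disjI2)
      apply (rule exI[of _ k], simp add: k(1), rule exI[of _ j], simp add: j(1))
      using a1 b1 a0 b0 by simp
    then show ?thesis by simp
  next
    case False
    have nb: "\<not> (\<exists>j<m. int n * int j > t \<and> int m dvd (int n * int j - t))"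
    proof
      assume "\<exists>j<m. int n * int j > t \<and> int m dvd (int n * int j - t)"
      then obtain j where j: "j < m" "int n * int j > t" "int m dvd (int n * int j - t)" by blast
      have "\<exists>i<n. int m * int i > t \<and> int n dvd (int m * int i - t)"
        by (rule gap_sym) (use j assms in auto)
      then obtain i where i: "i < n" "int m * int i > t" "int n dvd (int m * int i - t)" by blast
      have "x (n - 1 - i) = int m * int i" using xi[of "n-1-i"] i by simp
      then show False using False i by (metis diff_less assms(1) less_one le_less_trans diff_le_self zero_less_diff)
    qed
    have "AL n m t = AL n m (t+1)"
    proof (rule nth_equalityI)
      fix i assume "i < length (AL n m t)"
      then have i: "i < n" by simp
      then have "x i \<le> t \<or> \<not> int n dvd (x i - t)" using False by auto
      then show "AL n m t ! i = AL n m (t+1) ! i" using F_same[of "int n" "x i" t] i assms AL_nth by simp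
    qed simp
    moreover have "BL n m t = BL n m (t+1)"
    proof (rule nth_equalityI)
      fix i assume "i < length (BL n m t)"
      then have i: "i < m" by simp
      then have "int n * int i \<le> t \<or> \<not> int m dvd (int n * int i - t)" using nb by auto
      then show "BL n m t ! i = BL n m (t+1) ! i" using F_same[of "int m" "int n * int i" t] i assms BL_nth by simp
    qed simp
    ultimately show ?thesis by simp
  qed
qed

lemma chain:
  assumes "0 < n" "n < m" "coprime m n"
  shows "(weyl_step n m)\<^sup>*\<^sup>* (AL n m (t + int d), BL n m (t + int d)) (AL n m t, BL n m t)"
proof (induction d arbitrary: t)
  case 0 then show ?case by simp
next
  case (Suc d)
  have h1: "(weyl_step n m)\<^sup>*\<^sup>* (AL n m ((t+1) + int d), BL n m ((t+1) + int d)) (AL n m (t+1), BL n m (t+1))"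
    by (rule Suc.IH)
  have h2: "(weyl_step n m)\<^sup>*\<^sup>* (AL n m (t+1), BL n m (t+1)) (AL n m t, BL n m t)"
    using step_lemma[OF assms, of t] by (metis r_into_rtranclp rtranclp_reflclp)
  have e: "t + int (Suc d) = (t+1) + int d" by simp
  show ?case unfolding e using rtranclp_trans[OF h1 h2] .
qed

lemma perm_range:
  fixes f :: "nat \<Rightarrow> int"
  assumes "\<And>k. k<N \<Longrightarrow> 0 \<le> f k \<and> f k < int N"
    and "\<And>k1 k2. k1<N \<Longrightarrow> k2<N \<Longrightarrow> f k1 = f k2 \<Longrightarrow> k1 = k2"
  shows "mset (map f [0..<N]) = mset (map int [0..<N])"
proof -
  have d1: "distinct (map f [0..<N])" unfolding distinct_map using assms(2) by (auto simp: inj_on_def)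
  have d2: "distinct (map int [0..<N])" by (simp add: distinct_map)
  have sub: "set (map f [0..<N]) \<subseteq> set (map int [0..<N])"
  proof
    fix y assume "y \<in> set (map f [0..<N])"
    then obtain k where "k < N" "y = f k" by auto
    then have "0 \<le> y" "y < int N" using assms(1) by auto
    then have "y = int (nat y)" "nat y < N" by auto
    then show "y \<in> set (map int [0..<N])" by (metis atLeastLessThan_iff image_eqI le0 list.set_map set_upt)
  qed
  have "card (set (map f [0..<N])) = card (set (map int [0..<N]))"
    using distinct_card[OF d1] distinct_card[OF d2] by (simp only: length_map)
  then have "set (map f [0..<N]) = set (map int [0..<N])"
    using sub by (simp add: card_subset_eq)
  then show ?thesis using d1 d2 set_eq_iff_mset_eq_distinct by blast
qed

theorem corollary6p5:
  fixes n m :: nat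
  assumes "0 < n" and "n < m" and "coprime m n"
  shows "in_weyl_orbit n m
           (map (\<lambda>k. int m * (int n - 1 - int k)) [0..<n], map (\<lambda>k. int n * int k) [0..<m])
           (map int [0..<n], map int [0..<m])"
proof -
  have cop: "coprime (int m) (int n)" using assms(3) by simp
  have cop': "coprime (int n) (int m)" using cop by (simp add: coprime_commute)
  define T where "T = int (m * n)"
  have AT: "AL n m T = map (\<lambda>k. int m * (int n - 1 - int k)) [0..<n]"
    unfolding AL_def
  proof (rule map_cong[OF refl])
    fix k assume "k \<in> set [0..<n]"
    then have "int n - 1 - int k \<le> int n" by simp
    then have "int m * (int n - 1 - int k) \<le> int m * int n" by (simp add: mult_left_mono)
    then show "F (int n) (int m * (int n - 1 - int k)) T = int m * (int n - 1 - int k)"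
      unfolding F_def T_def by simp
  qed
  have BT: "BL n m T = map (\<lambda>k. int n * int k) [0..<m]"
    unfolding BL_def
  proof (rule map_cong[OF refl])
    fix k assume "k \<in> set [0..<m]"
    then have "int k \<le> int m" by simp
    then have "int k * int n \<le> int m * int n" using mult_right_mono[of "int k" "int m" "int n"] by simp
    then have "int n * int k \<le> int m * int n" by (simp add: mult.commute)
    then show "F (int m) (int n * int k) T = int n * int k"
      unfolding F_def T_def by simp
  qed
  have c1: "(weyl_step n m)\<^sup>*\<^sup>* (AL n m T, BL n m T) (AL n m 0, BL n m 0)"
    using chain[OF assms, of 0 "m*n"] unfolding T_def by simp
  have A0: "AL n m 0 = map (\<lambda>k. (int m * int (n - 1 - k)) mod int n) [0..<n]"
    unfolding AL_def
  proof (rule map_cong[OF refl])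
    fix k assume "k \<in> set [0..<n]"
    then have e: "int m * (int n - 1 - int k) = int m * int (n - 1 - k)" by auto
    have nn: "0 \<le> int m * int (n - 1 - k)" by simp
    show "F (int n) (int m * (int n - 1 - int k)) 0 = (int m * int (n - 1 - k)) mod int n"
      unfolding F_def e using nn by (cases "int m * int (n - 1 - k) = 0") auto
  qed
  have B0: "BL n m 0 = map (\<lambda>k. (int n * int k) mod int m) [0..<m]"
    unfolding BL_def F_def by auto
  have mA: "mset (AL n m 0) = mset (map int [0..<n])" unfolding A0
  proof (rule perm_range)
    fix k assume "k < n" then show "0 \<le> int m * int (n - 1 - k) mod int n \<and> int m * int (n - 1 - k) mod int n < int n"
      using assms(1) by simp
  next
    fix k1 k2 assume k: "k1 < n" "k2 < n" "int m * int (n - 1 - k1) mod int n = int m * int (n - 1 - k2) mod int n"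
    let ?t = "int m * int (n - 1 - k1) mod int n"
    have "int n dvd (int m * int (n - 1 - k1) - ?t)" by (simp add: mod_0_imp_dvd minus_mod_eq_mult_div)
    moreover have "int n dvd (int m * int (n - 1 - k2) - ?t)" using k(3) by (simp add: minus_mod_eq_mult_div)
    moreover have "0 \<le> int (n - 1 - k1)" "int (n - 1 - k1) < int n" "0 \<le> int (n - 1 - k2)" "int (n - 1 - k2) < int n"
      using k assms(1) by auto
    ultimately have "int (n - 1 - k1) = int (n - 1 - k2)"
      by (rule uniq[OF cop])
    then show "k1 = k2" using k by simp
  qed
  have mB: "mset (BL n m 0) = mset (map int [0..<m])" unfolding B0
  proof (rule perm_range)
    fix k assume "k < m" then show "0 \<le> int n * int k mod int m \<and> int n * int k mod int m < int m"
      using assms by simp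
  next
    fix k1 k2 assume k: "k1 < m" "k2 < m" "int n * int k1 mod int m = int n * int k2 mod int m"
    let ?t = "int n * int k1 mod int m"
    have "int m dvd (int n * int k1 - ?t)" by (simp add: minus_mod_eq_mult_div)
    moreover have "int m dvd (int n * int k2 - ?t)" using k(3) by (simp add: minus_mod_eq_mult_div)
    moreover have "0 \<le> int k1" "int k1 < int m" "0 \<le> int k2" "int k2 < int m"
      using k by auto
    ultimately have "int k1 = int k2"
      by (rule uniq[OF cop'])
    then show "k1 = k2" by simp
  qed
  have c2: "(weyl_step n m)\<^sup>*\<^sup>* (AL n m 0, BL n m 0) (map int [0..<n], BL n m 0)"
    by (rule liftA[OF swp_mset[OF mA]]) simp_all
  have c3: "(weyl_step n m)\<^sup>*\<^sup>* (map int [0..<n], BL n m 0) (map int [0..<n], map int [0..<m])"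
    by (rule liftB[OF swp_mset[OF mB]]) simp_all
  have "(weyl_step n m)\<^sup>*\<^sup>* (AL n m T, BL n m T) (map int [0..<n], map int [0..<m])"
    using rtranclp_trans[OF c1 rtranclp_trans[OF c2 c3]] .
  then show ?thesis unfolding in_weyl_orbit_def AT BT .
qed

end
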